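(* Call a group a generalized torsion group if every non-trivial element of it is a generalized torsion element. Then: (i) every quotient of a generalized torsion group is a generalized torsion group; (ii) the direct limit of a directed system of generalized torsion groups is a generalized torsion group; (iii) if $1\to K\to G\to Q\to 1$ is an exact sequence of groups with $K$ and $Q$ generalized torsion groups, then $G$ is a generalized torsion group; (iv) there exists a generalized torsion group having a subgroup which is not a generalized torsion group.
   Context: For $g,x$ in a group, $g^{x}:=xgx^{-1}$. A non-trivial element $g$ of a group $G$ is a generalized torsion element if there exist a positive integer $n$ and $x_1,\ldots,x_n\in G$ with $g^{x_1}g^{x_2}\cdots g^{x_n}=1$. *)

theory Defs
  imports "HOL-Algebra.Coset"
begin

definition conjg :: "('a, 'b) monoid_scheme \<Rightarrow> 'a \<Rightarrow> 'a \<Rightarrow> 'a" where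
  "conjg G g x = x \<otimes>\<^bsub>G\<^esub> g \<otimes>\<^bsub>G\<^esub> inv\<^bsub>G\<^esub> x"

definition gen_torsion :: "('a, 'b) monoid_scheme \<Rightarrow> 'a \<Rightarrow> bool" where
  "gen_torsion G g \<longleftrightarrow> g \<in> carrier G \<and> g \<noteq> \<one>\<^bsub>G\<^esub> \<and>
     (\<exists>xs. xs \<noteq> [] \<and> set xs \<subseteq> carrier G \<and>
        foldr (\<lambda>x acc. conjg G g x \<otimes>\<^bsub>G\<^esub> acc) xs \<one>\<^bsub>G\<^esub> = \<one>\<^bsub>G\<^esub>)"

definition gt_group :: "('a, 'b) monoid_scheme \<Rightarrow> bool" where
  "gt_group G \<longleftrightarrow> group G \<and> (\<forall>g \<in> carrier G. g \<noteq> \<one>\<^bsub>G\<^esub> \<longrightarrow> gen_torsion G g)"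

definition directed_system ::
  "'i set \<Rightarrow> ('i \<Rightarrow> 'i \<Rightarrow> bool) \<Rightarrow> ('i \<Rightarrow> ('a, 'b) monoid_scheme) \<Rightarrow> ('i \<Rightarrow> 'i \<Rightarrow> 'a \<Rightarrow> 'a) \<Rightarrow> bool"
where
  "directed_system I rel G f \<longleftrightarrow>
     I \<noteq> {} \<and>
     (\<forall>i\<in>I. rel i i) \<and>
     (\<forall>i\<in>I. \<forall>j\<in>I. \<forall>k\<in>I. rel i j \<and> rel j k \<longrightarrow> rel i k) \<and>
     (\<forall>i\<in>I. \<forall>j\<in>I. \<exists>k\<in>I. rel i k \<and> rel j k) \<and>
     (\<forall>i\<in>I. group (G i)) \<and>
     (\<forall>i\<in>I. \<forall>j\<in>I. rel i j \<longrightarrow> f i j \<in> hom (G i) (G j)) \<and>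
     (\<forall>i\<in>I. \<forall>x\<in>carrier (G i). f i i x = x) \<and>
     (\<forall>i\<in>I. \<forall>j\<in>I. \<forall>k\<in>I. rel i j \<and> rel j k \<longrightarrow>
        (\<forall>x\<in>carrier (G i). f j k (f i j x) = f i k x))"

definition dl_rel ::
  "'i set \<Rightarrow> ('i \<Rightarrow> 'i \<Rightarrow> bool) \<Rightarrow> ('i \<Rightarrow> ('a, 'b) monoid_scheme) \<Rightarrow> ('i \<Rightarrow> 'i \<Rightarrow> 'a \<Rightarrow> 'a) \<Rightarrow> (('i \<times> 'a) \<times> ('i \<times> 'a)) set"
where
  "dl_rel I rel G f = {((i, x), (j, y)). i \<in> I \<and> j \<in> I \<and> x \<in> carrier (G i) \<and> y \<in> carrier (G j) \<and>
      (\<exists>k\<in>I. rel i k \<and> rel j k \<and> f i k x = f j k y)}"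

definition direct_limit ::
  "'i set \<Rightarrow> ('i \<Rightarrow> 'i \<Rightarrow> bool) \<Rightarrow> ('i \<Rightarrow> ('a, 'b) monoid_scheme) \<Rightarrow> ('i \<Rightarrow> 'i \<Rightarrow> 'a \<Rightarrow> 'a) \<Rightarrow> ('i \<times> 'a) set monoid"
where
  "direct_limit I rel G f =
     \<lparr> carrier = (SIGMA i:I. carrier (G i)) // dl_rel I rel G f,
       mult = (\<lambda>A B. SOME C. \<exists>i x j y k. (i, x) \<in> A \<and> (j, y) \<in> B \<and> k \<in> I \<and> rel i k \<and> rel j k \<and>
                 C = dl_rel I rel G f `` {(k, f i k x \<otimes>\<^bsub>G k\<^esub> f j k y)}),
       one = dl_rel I rel G f `` {(SOME i. i \<in> I, \<one>\<^bsub>G (SOME i. i \<in> I)\<^esub>)} \<rparr>"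

end

theory Submission
  imports Defs "HOL-Library.Nat_Bijection"
begin


definition pc :: "('a, 'b) monoid_scheme \<Rightarrow> 'a \<Rightarrow> 'a list \<Rightarrow> 'a" where
  "pc G g xs = foldr (\<lambda>x acc. conjg G g x \<otimes>\<^bsub>G\<^esub> acc) xs \<one>\<^bsub>G\<^esub>"

lemma pc_Nil[simp]: "pc G g [] = \<one>\<^bsub>G\<^esub>" by (simp add: pc_def)
lemma pc_Cons[simp]: "pc G g (x # xs) = conjg G g x \<otimes>\<^bsub>G\<^esub> pc G g xs" by (simp add: pc_def)

lemma gen_torsion_pc: "gen_torsion G g \<longleftrightarrow> g \<in> carrier G \<and> g \<noteq> \<one>\<^bsub>G\<^esub> \<and>
     (\<exists>xs. xs \<noteq> [] \<and> set xs \<subseteq> carrier G \<and> pc G g xs = \<one>\<^bsub>G\<^esub>)"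
  by (simp add: gen_torsion_def pc_def)

context group begin

lemma conjg_closed[simp]: "g \<in> carrier G \<Longrightarrow> x \<in> carrier G \<Longrightarrow> conjg G g x \<in> carrier G"
  by (simp add: conjg_def)

lemma pc_closed[simp]: "g \<in> carrier G \<Longrightarrow> set xs \<subseteq> carrier G \<Longrightarrow> pc G g xs \<in> carrier G"
  by (induction xs) auto

lemma pc_append: "g \<in> carrier G \<Longrightarrow> set xs \<subseteq> carrier G \<Longrightarrow> set ys \<subseteq> carrier G \<Longrightarrow>
   pc G g (xs @ ys) = pc G g xs \<otimes> pc G g ys"
  by (induction xs) (auto simp: m_assoc)

lemma conjg_one[simp]: "w \<in> carrier G \<Longrightarrow> conjg G \<one> w = \<one>"
  by (simp add: conjg_def)

lemma conjg_mult: "a \<in> carrier G \<Longrightarrow> b \<in> carrier G \<Longrightarrow> w \<in> carrier G \<Longrightarrow>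
  conjg G (a \<otimes> b) w = conjg G a w \<otimes> conjg G b w"
proof -
  assume "a \<in> carrier G" "b \<in> carrier G" "w \<in> carrier G"
  moreover have "inv w \<otimes> (w \<otimes> c) = c" if "c \<in> carrier G" for c
    using that \<open>w \<in> carrier G\<close> by (simp add: m_assoc[symmetric])
  ultimately show ?thesis by (simp add: conjg_def m_assoc)
qed

lemma conjg_conjg: "g \<in> carrier G \<Longrightarrow> x \<in> carrier G \<Longrightarrow> w \<in> carrier G \<Longrightarrow>
  conjg G (conjg G g x) w = conjg G g (w \<otimes> x)"
  by (simp add: conjg_def m_assoc inv_mult_group)

lemma conjg_pc: "g \<in> carrier G \<Longrightarrow> set xs \<subseteq> carrier G \<Longrightarrow> w \<in> carrier G \<Longrightarrow>
  conjg G (pc G g xs) w = pc G g (map ((\<otimes>) w) xs)"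
  by (induction xs) (auto simp: conjg_mult conjg_conjg)

lemma pc_pc: "g \<in> carrier G \<Longrightarrow> set xs \<subseteq> carrier G \<Longrightarrow> set ws \<subseteq> carrier G \<Longrightarrow>
  pc G (pc G g xs) ws = pc G g (concat (map (\<lambda>w. map ((\<otimes>) w) xs) ws))"
proof (induction ws)
  case Nil
  then show ?case by simp
next
  case (Cons w ws)
  have s1: "set (map ((\<otimes>) w) xs) \<subseteq> carrier G" using Cons by auto
  have s2: "set (concat (map (\<lambda>w. map ((\<otimes>) w) xs) ws)) \<subseteq> carrier G" using Cons by auto
  show ?case using Cons s1 s2 by (simp add: conjg_pc pc_append)
qed

end

lemma hom_conjg:
  assumes "group G" "group H" "h \<in> hom G H" "g \<in> carrier G" "x \<in> carrier G"
  shows "h (conjg G g x) = conjg H (h g) (h x)"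
proof -
  interpret group_hom G H h using assms by (simp add: group_hom_def group_hom_axioms_def)
  show ?thesis using assms by (simp add: conjg_def)
qed

lemma hom_pc:
  assumes "group G" "group H" "h \<in> hom G H" "g \<in> carrier G" "set xs \<subseteq> carrier G"
  shows "h (pc G g xs) = pc H (h g) (map h xs)"
proof -
  interpret group_hom G H h using assms by (simp add: group_hom_def group_hom_axioms_def)
  show ?thesis using assms(4,5)
    by (induction xs) (auto simp: hom_conjg[OF assms(1-3)] group.pc_closed[OF assms(1)])
qed

lemma gt_hom_image:
  assumes "group G" "group H" "h \<in> hom G H" "h ` carrier G = carrier H" "gt_group G"
  shows "gt_group H"
  unfolding gt_group_def
proof (intro conjI ballI impI)
  interpret group_hom G H h using assms by (simp add: group_hom_def group_hom_axioms_def)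
  show "group H" by fact
  fix y assume y: "y \<in> carrier H" "y \<noteq> \<one>\<^bsub>H\<^esub>"
  then obtain g where g: "g \<in> carrier G" "y = h g" using assms(4) by blast
  then have "g \<noteq> \<one>\<^bsub>G\<^esub>" using y by auto
  then have "gen_torsion G g" using assms(5) g unfolding gt_group_def by blast
  then obtain xs where xs: "xs \<noteq> []" "set xs \<subseteq> carrier G" "pc G g xs = \<one>\<^bsub>G\<^esub>"
    unfolding gen_torsion_pc by blast
  have "pc H y (map h xs) = \<one>\<^bsub>H\<^esub>"
    using hom_pc[OF assms(1-3) g(1) xs(2)] xs(3) g by simp
  moreover have "set (map h xs) \<subseteq> carrier H" using xs(2) by auto
  ultimately show "gen_torsion H y" unfolding gen_torsion_pc using y xs(1)
    by (metis list.map_disc_iff)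
qed

lemma part1:
  assumes "gt_group G" "N \<lhd> G" shows "gt_group (G Mod N)"
proof -
  have gG: "group G" using assms unfolding gt_group_def by simp
  show ?thesis
  proof (rule gt_hom_image[OF gG _ _ _ assms(1)])
    show "group (G Mod N)" using assms(2) by (rule normal.factorgroup_is_group)
    show "r_coset G N \<in> hom G (G Mod N)" using assms(2) by (rule normal.r_coset_hom_Mod)
    show "r_coset G N ` carrier G = carrier (G Mod N)"
      by (auto simp: FactGroup_def RCOSETS_def)
  qed
qed



locale dsys =
  fixes I :: "'i set" and rel :: "'i \<Rightarrow> 'i \<Rightarrow> bool"
    and G :: "'i \<Rightarrow> ('c, 'd) monoid_scheme" and f :: "'i \<Rightarrow> 'i \<Rightarrow> 'c \<Rightarrow> 'c"
  assumes ds: "directed_system I rel G f"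
begin

abbreviation "R \<equiv> dl_rel I rel G f"
abbreviation "S \<equiv> SIGMA i:I. carrier (G i)"
abbreviation "DL \<equiv> direct_limit I rel G f"
definition cls :: "'i \<Rightarrow> 'c \<Rightarrow> ('i \<times> 'c) set" where "cls i x = R `` {(i, x)}"

lemmas dsp = ds[unfolded directed_system_def]
lemma I_ne: "I \<noteq> {}" using dsp by (rule conjunct1)
lemma rrefl: "i \<in> I \<Longrightarrow> rel i i"
  using dsp[THEN conjunct2, THEN conjunct1] by blast
lemma rtrans: "i \<in> I \<Longrightarrow> j \<in> I \<Longrightarrow> k \<in> I \<Longrightarrow> rel i j \<Longrightarrow> rel j k \<Longrightarrow> rel i k"
  using dsp[THEN conjunct2, THEN conjunct2, THEN conjunct1] by blast
lemma dir: "i \<in> I \<Longrightarrow> j \<in> I \<Longrightarrow> \<exists>k\<in>I. rel i k \<and> rel j k"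
  using dsp[THEN conjunct2, THEN conjunct2, THEN conjunct2, THEN conjunct1] by blast
lemma grp: "i \<in> I \<Longrightarrow> group (G i)"
  using dsp[THEN conjunct2, THEN conjunct2, THEN conjunct2, THEN conjunct2, THEN conjunct1] by blast
lemma fhom: "i \<in> I \<Longrightarrow> j \<in> I \<Longrightarrow> rel i j \<Longrightarrow> f i j \<in> hom (G i) (G j)"
  using dsp[THEN conjunct2, THEN conjunct2, THEN conjunct2, THEN conjunct2, THEN conjunct2, THEN conjunct1] by blast
lemma fid: "i \<in> I \<Longrightarrow> x \<in> carrier (G i) \<Longrightarrow> f i i x = x"
  using dsp[THEN conjunct2, THEN conjunct2, THEN conjunct2, THEN conjunct2, THEN conjunct2, THEN conjunct2, THEN conjunct1] by blast
lemma fcomp: "i \<in> I \<Longrightarrow> j \<in> I \<Longrightarrow> k \<in> I \<Longrightarrow> rel i j \<Longrightarrow> rel j k \<Longrightarrow> x \<in> carrier (G i) \<Longrightarrow>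
   f j k (f i j x) = f i k x"
  using dsp[THEN conjunct2, THEN conjunct2, THEN conjunct2, THEN conjunct2, THEN conjunct2, THEN conjunct2, THEN conjunct2] by blast

lemma f_closed: "i \<in> I \<Longrightarrow> j \<in> I \<Longrightarrow> rel i j \<Longrightarrow> x \<in> carrier (G i) \<Longrightarrow> f i j x \<in> carrier (G j)"
  using fhom by (meson hom_in_carrier)
lemma f_mult: "i \<in> I \<Longrightarrow> j \<in> I \<Longrightarrow> rel i j \<Longrightarrow> x \<in> carrier (G i) \<Longrightarrow> y \<in> carrier (G i) \<Longrightarrow>
   f i j (x \<otimes>\<^bsub>G i\<^esub> y) = f i j x \<otimes>\<^bsub>G j\<^esub> f i j y"
  using fhom by (meson hom_mult)
lemma f_one: "i \<in> I \<Longrightarrow> j \<in> I \<Longrightarrow> rel i j \<Longrightarrow> f i j \<one>\<^bsub>G i\<^esub> = \<one>\<^bsub>G j\<^esub>"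
  using fhom grp by (meson group_hom.hom_one group_hom.intro group_hom_axioms.intro)

lemma dir3: "i \<in> I \<Longrightarrow> j \<in> I \<Longrightarrow> l \<in> I \<Longrightarrow> \<exists>k\<in>I. rel i k \<and> rel j k \<and> rel l k"
proof -
  assume a: "i \<in> I" "j \<in> I" "l \<in> I"
  then obtain k1 where k1: "k1 \<in> I" "rel i k1" "rel j k1" using dir by blast
  then obtain k where k: "k \<in> I" "rel k1 k" "rel l k" using dir a by blast
  then show ?thesis using k1 a rtrans by blast
qed

lemma R_iff: "((i, x), (j, y)) \<in> R \<longleftrightarrow> i \<in> I \<and> j \<in> I \<and> x \<in> carrier (G i) \<and> y \<in> carrier (G j) \<and>
   (\<exists>k\<in>I. rel i k \<and> rel j k \<and> f i k x = f j k y)"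
  by (simp add: dl_rel_def)

lemma R_refl: "i \<in> I \<Longrightarrow> x \<in> carrier (G i) \<Longrightarrow> ((i, x), (i, x)) \<in> R"
  unfolding R_iff using rrefl by blast

lemma equivR: "equiv S R"
proof (rule equivI)
  show "R \<subseteq> S \<times> S" by (auto simp: dl_rel_def)
  show "refl_on S R"
  proof (rule refl_onI)
    fix p assume "p \<in> S" then show "(p, p) \<in> R"
      by (cases p) (auto simp: R_iff intro: rrefl)
  qed
  show "sym R" by (rule symI) (auto simp: dl_rel_def)
  show "trans R"
  proof (rule transI)
    fix p q r assume pq: "(p, q) \<in> R" and qr: "(q, r) \<in> R"
    obtain i x where p: "p = (i, x)" by fastforce
    obtain j y where q: "q = (j, y)" by fastforce
    obtain l z where r: "r = (l, z)" by fastforce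
    from pq obtain k1 where k1: "i \<in> I" "j \<in> I" "x \<in> carrier (G i)" "y \<in> carrier (G j)"
      "k1 \<in> I" "rel i k1" "rel j k1" "f i k1 x = f j k1 y" unfolding p q R_iff by blast
    from qr obtain k2 where k2: "l \<in> I" "z \<in> carrier (G l)"
      "k2 \<in> I" "rel j k2" "rel l k2" "f j k2 y = f l k2 z" unfolding q r R_iff by blast
    obtain m where m: "m \<in> I" "rel k1 m" "rel k2 m" using dir k1 k2 by blast
    have "f i m x = f k1 m (f i k1 x)" using fcomp[of i k1 m x] k1 m by simp
    also have "\<dots> = f k1 m (f j k1 y)" using k1 by simp
    also have "\<dots> = f j m y" using fcomp[of j k1 m y] k1 m by simp
    also have "\<dots> = f k2 m (f j k2 y)" using fcomp[of j k2 m y] k1 k2 m by simp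
    also have "\<dots> = f k2 m (f l k2 z)" using k2 by simp
    also have "\<dots> = f l m z" using fcomp[of l k2 m z] k2 m by simp
    finally have "f i m x = f l m z" .
    moreover have "rel i m" "rel l m" using rtrans k1 k2 m by blast+
    ultimately show "(p, r) \<in> R" unfolding p r R_iff using k1 k2 m by blast
  qed
qed

lemma carrier_DL: "carrier DL = S // R" by (simp add: direct_limit_def)

lemma cls_in: "i \<in> I \<Longrightarrow> x \<in> carrier (G i) \<Longrightarrow> cls i x \<in> carrier DL"
  unfolding carrier_DL cls_def by (rule quotientI) simp

lemma carrier_cases: "A \<in> carrier DL \<Longrightarrow> \<exists>i\<in>I. \<exists>x\<in>carrier (G i). A = cls i x"
  unfolding carrier_DL cls_def by (erule quotientE) auto

lemma cls_eq_iff: "i \<in> I \<Longrightarrow> j \<in> I \<Longrightarrow> x \<in> carrier (G i) \<Longrightarrow> y \<in> carrier (G j) \<Longrightarrow>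
   cls i x = cls j y \<longleftrightarrow> ((i, x), (j, y)) \<in> R"
  unfolding cls_def by (rule eq_equiv_class_iff[OF equivR]) auto

lemma cls_shift: "i \<in> I \<Longrightarrow> k \<in> I \<Longrightarrow> rel i k \<Longrightarrow> x \<in> carrier (G i) \<Longrightarrow> cls i x = cls k (f i k x)"
  using f_closed fid[of k "f i k x"] rrefl
  by (subst cls_eq_iff) (auto simp: R_iff)

lemma wd: "i \<in> I \<Longrightarrow> j \<in> I \<Longrightarrow> k \<in> I \<Longrightarrow> m \<in> I \<Longrightarrow> rel i k \<Longrightarrow> rel j k \<Longrightarrow> rel k m \<Longrightarrow>
   x \<in> carrier (G i) \<Longrightarrow> y \<in> carrier (G j) \<Longrightarrow>
   cls k (f i k x \<otimes>\<^bsub>G k\<^esub> f j k y) = cls m (f i m x \<otimes>\<^bsub>G m\<^esub> f j m y)"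
proof -
  assume a: "i \<in> I" "j \<in> I" "k \<in> I" "m \<in> I" "rel i k" "rel j k" "rel k m"
    "x \<in> carrier (G i)" "y \<in> carrier (G j)"
  have c: "f i k x \<in> carrier (G k)" "f j k y \<in> carrier (G k)" using a f_closed by auto
  then have "cls k (f i k x \<otimes>\<^bsub>G k\<^esub> f j k y) = cls m (f k m (f i k x \<otimes>\<^bsub>G k\<^esub> f j k y))"
    using a by (intro cls_shift) (auto intro: monoid.m_closed group.is_monoid grp)
  also have "\<dots> = cls m (f i m x \<otimes>\<^bsub>G m\<^esub> f j m y)"
    using c a by (simp add: f_mult fcomp)
  finally show ?thesis .
qed

lemma mult_cls:
  assumes a: "i \<in> I" "j \<in> I" "k \<in> I" "rel i k" "rel j k" "x \<in> carrier (G i)" "y \<in> carrier (G j)"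
  shows "cls i x \<otimes>\<^bsub>DL\<^esub> cls j y = cls k (f i k x \<otimes>\<^bsub>G k\<^esub> f j k y)"
proof -
  let ?P = "\<lambda>C. \<exists>i' x' j' y' k'. (i', x') \<in> cls i x \<and> (j', y') \<in> cls j y \<and> k' \<in> I \<and> rel i' k' \<and> rel j' k' \<and>
                 C = R `` {(k', f i' k' x' \<otimes>\<^bsub>G k'\<^esub> f j' k' y')}"
  have mem: "(i, x) \<in> cls i x" "(j, y) \<in> cls j y"
    unfolding cls_def using a R_refl by auto
  have "cls i x \<otimes>\<^bsub>DL\<^esub> cls j y = (SOME C. ?P C)" by (simp add: direct_limit_def)
  also have "\<dots> = cls k (f i k x \<otimes>\<^bsub>G k\<^esub> f j k y)"
  proof (rule someI2[of ?P])
    show "?P (cls k (f i k x \<otimes>\<^bsub>G k\<^esub> f j k y))"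
      using mem a unfolding cls_def by blast
  next
    fix C assume "?P C"
    then obtain i' x' j' y' k' where b: "(i', x') \<in> cls i x" "(j', y') \<in> cls j y" "k' \<in> I"
      "rel i' k'" "rel j' k'" "C = cls k' (f i' k' x' \<otimes>\<^bsub>G k'\<^esub> f j' k' y')"
      unfolding cls_def by blast
    from b(1) obtain m1 where m1: "i' \<in> I" "x' \<in> carrier (G i')" "m1 \<in> I" "rel i m1" "rel i' m1"
      "f i m1 x = f i' m1 x'" unfolding cls_def by (auto simp: R_iff)
    from b(2) obtain m2 where m2: "j' \<in> I" "y' \<in> carrier (G j')" "m2 \<in> I" "rel j m2" "rel j' m2"
      "f j m2 y = f j' m2 y'" unfolding cls_def by (auto simp: R_iff)
    obtain n1 where n1: "n1 \<in> I" "rel k n1" "rel k' n1" using dir a b by blast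
    obtain m where m: "m \<in> I" "rel n1 m" "rel m1 m" "rel m2 m" using dir3 n1 m1 m2 by blast
    have km: "rel k m" "rel k' m" using rtrans n1 m a b by blast+
    have im: "rel i m" "rel i' m" "rel j m" "rel j' m" using rtrans m1 m2 m a b by blast+
    have ex: "f i m x = f i' m x'"
      using fcomp[of i m1 m x] fcomp[of i' m1 m x'] m1 m a by simp
    have ey: "f j m y = f j' m y'"
      using fcomp[of j m2 m y] fcomp[of j' m2 m y'] m2 m a by simp
    have "C = cls m (f i' m x' \<otimes>\<^bsub>G m\<^esub> f j' m y')"
      using b m1 m2 m km by (simp add: wd)
    also have "\<dots> = cls k (f i k x \<otimes>\<^bsub>G k\<^esub> f j k y)"
      using wd[of i j k m x y] a m km ex ey by simp
    finally show "C = cls k (f i k x \<otimes>\<^bsub>G k\<^esub> f j k y)" .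
  qed
  finally show ?thesis .
qed

lemma mult_same: "k \<in> I \<Longrightarrow> x \<in> carrier (G k) \<Longrightarrow> y \<in> carrier (G k) \<Longrightarrow>
  cls k x \<otimes>\<^bsub>DL\<^esub> cls k y = cls k (x \<otimes>\<^bsub>G k\<^esub> y)"
  using mult_cls[of k k k x y] rrefl fid by simp

lemma one_cls: "i \<in> I \<Longrightarrow> \<one>\<^bsub>DL\<^esub> = cls i \<one>\<^bsub>G i\<^esub>"
proof -
  assume i: "i \<in> I"
  define i0 where "i0 = (SOME i. i \<in> I)"
  have i0: "i0 \<in> I" unfolding i0_def using I_ne by (simp add: some_in_eq)
  obtain k where k: "k \<in> I" "rel i0 k" "rel i k" using dir i i0 by blast
  have "\<one>\<^bsub>DL\<^esub> = cls i0 \<one>\<^bsub>G i0\<^esub>" by (simp add: direct_limit_def cls_def i0_def)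
  also have "\<dots> = cls k \<one>\<^bsub>G k\<^esub>" using cls_shift[of i0 k] k i0 f_one grp
    by (simp add: group.is_monoid monoid.one_closed)
  also have "\<dots> = cls i \<one>\<^bsub>G i\<^esub>" using cls_shift[of i k] k i f_one grp
    by (simp add: group.is_monoid monoid.one_closed)
  finally show ?thesis .
qed

lemma lift: "A \<in> carrier DL \<Longrightarrow> \<exists>i\<in>I. \<forall>k\<in>I. rel i k \<longrightarrow> (\<exists>x\<in>carrier (G k). A = cls k x)"
proof -
  assume "A \<in> carrier DL"
  then obtain i x where ix: "i \<in> I" "x \<in> carrier (G i)" "A = cls i x" using carrier_cases by blast
  have "\<exists>y\<in>carrier (G k). A = cls k y" if "k \<in> I" "rel i k" for k
    using ix that f_closed[of i k x] cls_shift[of i k x] by blast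
  then show ?thesis using ix(1) by blast
qed

lemma group_DL: "group DL"
proof (rule groupI)
  fix A B assume AB: "A \<in> carrier DL" "B \<in> carrier DL"
  obtain i where i: "i \<in> I" "\<forall>k\<in>I. rel i k \<longrightarrow> (\<exists>x\<in>carrier (G k). A = cls k x)"
    using lift[OF AB(1)] by blast
  obtain j where j: "j \<in> I" "\<forall>k\<in>I. rel j k \<longrightarrow> (\<exists>x\<in>carrier (G k). B = cls k x)"
    using lift[OF AB(2)] by blast
  obtain k where k: "k \<in> I" "rel i k" "rel j k" using dir[OF i(1) j(1)] by blast
  obtain x where x: "x \<in> carrier (G k)" "A = cls k x" using i(2) k by blast
  obtain y where y: "y \<in> carrier (G k)" "B = cls k y" using j(2) k by blast
  from x y show "A \<otimes>\<^bsub>DL\<^esub> B \<in> carrier DL" using k mult_same cls_in grp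
    by (simp add: group.is_monoid monoid.m_closed)
next
  obtain i where i: "i \<in> I" using I_ne by blast
  then show "\<one>\<^bsub>DL\<^esub> \<in> carrier DL" using one_cls[OF i] cls_in grp by (simp add: group.is_monoid monoid.one_closed)
next
  fix A B C assume ABC: "A \<in> carrier DL" "B \<in> carrier DL" "C \<in> carrier DL"
  obtain i where i: "i \<in> I" "\<forall>k\<in>I. rel i k \<longrightarrow> (\<exists>x\<in>carrier (G k). A = cls k x)"
    using lift[OF ABC(1)] by blast
  obtain j where j: "j \<in> I" "\<forall>k\<in>I. rel j k \<longrightarrow> (\<exists>x\<in>carrier (G k). B = cls k x)"
    using lift[OF ABC(2)] by blast
  obtain l where l: "l \<in> I" "\<forall>k\<in>I. rel l k \<longrightarrow> (\<exists>x\<in>carrier (G k). C = cls k x)"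
    using lift[OF ABC(3)] by blast
  obtain k where k: "k \<in> I" "rel i k" "rel j k" "rel l k" using dir3[OF i(1) j(1) l(1)] by blast
  obtain x where x: "x \<in> carrier (G k)" "A = cls k x" using i(2) k by blast
  obtain y where y: "y \<in> carrier (G k)" "B = cls k y" using j(2) k by blast
  obtain z where z: "z \<in> carrier (G k)" "C = cls k z" using l(2) k by blast
  note xyz = x y z
  interpret Gk: group "G k" using grp k by simp
  show "A \<otimes>\<^bsub>DL\<^esub> B \<otimes>\<^bsub>DL\<^esub> C = A \<otimes>\<^bsub>DL\<^esub> (B \<otimes>\<^bsub>DL\<^esub> C)"
    using xyz k by (simp add: mult_same Gk.m_assoc)
next
  fix A assume "A \<in> carrier DL"
  then obtain i x where ix: "i \<in> I" "x \<in> carrier (G i)" "A = cls i x" using carrier_cases by blast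
  interpret Gi: group "G i" using grp ix by simp
  show "\<one>\<^bsub>DL\<^esub> \<otimes>\<^bsub>DL\<^esub> A = A" using ix by (simp add: one_cls[OF ix(1)] mult_same)
  show "\<exists>B\<in>carrier DL. B \<otimes>\<^bsub>DL\<^esub> A = \<one>\<^bsub>DL\<^esub>"
    using ix by (intro bexI[of _ "cls i (inv\<^bsub>G i\<^esub> x)"]) (simp_all add: one_cls[OF ix(1)] mult_same cls_in)
qed

lemma cls_hom: "i \<in> I \<Longrightarrow> cls i \<in> hom (G i) DL"
  by (rule homI) (simp_all add: cls_in mult_same)

lemma gt_DL: assumes "\<forall>i\<in>I. gt_group (G i)" shows "gt_group DL"
  unfolding gt_group_def
proof (intro conjI ballI impI)
  show "group DL" by (rule group_DL)
  fix A assume A: "A \<in> carrier DL" "A \<noteq> \<one>\<^bsub>DL\<^esub>"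
  then obtain i x where ix: "i \<in> I" "x \<in> carrier (G i)" "A = cls i x" using carrier_cases by blast
  have "x \<noteq> \<one>\<^bsub>G i\<^esub>" using A ix one_cls[OF ix(1)] by auto
  then have "gen_torsion (G i) x" using assms ix unfolding gt_group_def by blast
  then obtain xs where xs: "xs \<noteq> []" "set xs \<subseteq> carrier (G i)" "pc (G i) x xs = \<one>\<^bsub>G i\<^esub>"
    unfolding gen_torsion_pc by blast
  have "pc DL A (map (cls i) xs) = \<one>\<^bsub>DL\<^esub>"
    using hom_pc[OF grp[OF ix(1)] group_DL cls_hom[OF ix(1)] ix(2) xs(2)] xs(3) ix one_cls[OF ix(1)] by simp
  moreover have "set (map (cls i) xs) \<subseteq> carrier DL" using xs(2) ix cls_in by auto
  ultimately show "gen_torsion DL A" using A xs(1) unfolding gen_torsion_pc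
    by (intro conjI exI[of _ "map (cls i) xs"]) auto
qed

end

lemma part2: "directed_system I rel G f \<and> (\<forall>i\<in>I. gt_group (G i)) \<Longrightarrow> gt_group (direct_limit I rel G f)"
  using dsys.gt_DL dsys.intro by blast



lemma part3:
  assumes gK: "group K" and gG: "group G" and gQ: "group Q"
    and iota: "\<iota> \<in> hom K G" and inj: "inj_on \<iota> (carrier K)"
    and pi: "\<pi> \<in> hom G Q" and surj: "\<pi> ` carrier G = carrier Q"
    and ker: "\<iota> ` carrier K = kernel G Q \<pi>"
    and tK: "gt_group K" and tQ: "gt_group Q"
  shows "gt_group G"
  unfolding gt_group_def
proof (intro conjI ballI impI)
  interpret I: group_hom K G \<iota> using gK gG iota by (simp add: group_hom_def group_hom_axioms_def)
  interpret P: group_hom G Q \<pi> using gG gQ pi by (simp add: group_hom_def group_hom_axioms_def)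
  interpret G: group G by fact
  show "group G" by fact
  fix g assume g: "g \<in> carrier G" "g \<noteq> \<one>\<^bsub>G\<^esub>"
  have fromK: "\<exists>zs. zs \<noteq> [] \<and> set zs \<subseteq> carrier G \<and> pc G k zs = \<one>\<^bsub>G\<^esub>"
    if a: "a \<in> carrier K" "k = \<iota> a" "k \<noteq> \<one>\<^bsub>G\<^esub>" for a k
  proof -
    have "a \<noteq> \<one>\<^bsub>K\<^esub>" using a by auto
    then have "gen_torsion K a" using tK a unfolding gt_group_def by blast
    then obtain zs where zs: "zs \<noteq> []" "set zs \<subseteq> carrier K" "pc K a zs = \<one>\<^bsub>K\<^esub>"
      unfolding gen_torsion_pc by blast
    have "pc G k (map \<iota> zs) = \<one>\<^bsub>G\<^esub>"
      using hom_pc[OF gK gG iota a(1) zs(2)] zs(3) a by simp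
    moreover have "set (map \<iota> zs) \<subseteq> carrier G" using zs(2) by auto
    ultimately show ?thesis using zs(1) by (metis list.map_disc_iff)
  qed
  show "gen_torsion G g"
  proof (cases "\<pi> g = \<one>\<^bsub>Q\<^esub>")
    case True
    then have "g \<in> kernel G Q \<pi>" using g by (simp add: kernel_def)
    then obtain a where a: "a \<in> carrier K" "g = \<iota> a" using ker by (metis imageE)
    obtain zs where "zs \<noteq> []" "set zs \<subseteq> carrier G" "pc G g zs = \<one>\<^bsub>G\<^esub>"
      using fromK[OF a g(2)] by blast
    then show ?thesis using g unfolding gen_torsion_pc by (intro conjI exI[of _ zs]) auto
  next
    case False
    then have "gen_torsion Q (\<pi> g)" using tQ g unfolding gt_group_def by auto
    then obtain ys where ys: "ys \<noteq> []" "set ys \<subseteq> carrier Q" "pc Q (\<pi> g) ys = \<one>\<^bsub>Q\<^esub>"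
      unfolding gen_torsion_pc by blast
    define xs where "xs = map (\<lambda>y. SOME x. x \<in> carrier G \<and> \<pi> x = y) ys"
    have pre: "\<exists>x. x \<in> carrier G \<and> \<pi> x = y" if "y \<in> set ys" for y
    proof -
      have "y \<in> \<pi> ` carrier G" using that ys(2) surj by (simp add: subset_iff)
      then show ?thesis by (auto simp only: image_iff)
    qed
    have xsG: "set xs \<subseteq> carrier G" unfolding xs_def
    proof (clarsimp)
      fix y assume "y \<in> set ys"
      from someI_ex[OF pre[OF this]] show "(SOME x. x \<in> carrier G \<and> \<pi> x = y) \<in> carrier G" by blast
    qed
    have mxs: "map \<pi> xs = ys" unfolding xs_def map_map
      
    proof (rule map_idI)
      fix y assume "y \<in> set ys"
      from someI_ex[OF pre[OF this]] show "(\<pi> \<circ> (\<lambda>y. SOME x. x \<in> carrier G \<and> \<pi> x = y)) y = y" by simp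
    qed
    have xsne: "xs \<noteq> []" using ys(1) xs_def by simp
    define k where "k = pc G g xs"
    have kG: "k \<in> carrier G" using g xsG by (simp add: k_def group.pc_closed[OF gG])
    have "\<pi> k = \<one>\<^bsub>Q\<^esub>" using hom_pc[OF gG gQ pi g(1) xsG] mxs ys(3) k_def by simp
    then have "k \<in> kernel G Q \<pi>" using kG by (simp add: kernel_def)
    then obtain a where a: "a \<in> carrier K" "k = \<iota> a" using ker by (metis imageE)
    show ?thesis
    proof (cases "k = \<one>\<^bsub>G\<^esub>")
      case True
      then have "pc G g xs = \<one>\<^bsub>G\<^esub>" using k_def by simp
      then show ?thesis using g xsne xsG unfolding gen_torsion_pc by (intro conjI exI[of _ xs]) auto
    next
      case False
      then obtain ws where ws: "ws \<noteq> []" "set ws \<subseteq> carrier G" "pc G k ws = \<one>\<^bsub>G\<^esub>"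
        using fromK[OF a False] by blast
      let ?l = "concat (map (\<lambda>w. map ((\<otimes>\<^bsub>G\<^esub>) w) xs) ws)"
      have "pc G g ?l = \<one>\<^bsub>G\<^esub>" using ws(3) group.pc_pc[OF gG g(1) xsG ws(2)] k_def by simp
      moreover have "set ?l \<subseteq> carrier G" using xsG ws(2) by auto
      moreover have "?l \<noteq> []" using xsne ws(1) by (cases ws; cases xs) auto
      ultimately show ?thesis using g unfolding gen_torsion_pc by (intro conjI exI[of _ ?l]) auto
    qed
  qed
qed



definition dmul :: "int \<times> bool \<Rightarrow> int \<times> bool \<Rightarrow> int \<times> bool" where
  "dmul p q = (fst p + (if snd p then - fst q else fst q), snd p \<noteq> snd q)"
definition dinv :: "int \<times> bool \<Rightarrow> int \<times> bool" where
  "dinv p = (if snd p then p else (- fst p, False))"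
definition enc :: "int \<times> bool \<Rightarrow> nat" where
  "enc p = 2 * int_encode (fst p) + (if snd p then 1 else 0)"
definition dec :: "nat \<Rightarrow> int \<times> bool" where
  "dec n = (int_decode (n div 2), odd n)"

lemma dec_enc[simp]: "dec (enc p) = p"
  by (cases p) (simp add: dec_def enc_def)
lemma enc_dec[simp]: "enc (dec n) = n"
  by (simp add: dec_def enc_def)
lemma enc_inj[simp]: "enc p = enc q \<longleftrightarrow> p = q"
  by (metis dec_enc)

definition Dinf :: "nat monoid" where
  "Dinf = \<lparr>carrier = UNIV, mult = (\<lambda>m n. enc (dmul (dec m) (dec n))), one = enc (0, False)\<rparr>"

lemma Dinf_simps[simp]: "carrier Dinf = UNIV" "m \<otimes>\<^bsub>Dinf\<^esub> n = enc (dmul (dec m) (dec n))"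
  "\<one>\<^bsub>Dinf\<^esub> = enc (0, False)"
  by (simp_all add: Dinf_def)

lemma group_Dinf: "group Dinf"
proof (rule groupI)
  fix x y z :: nat
  show "x \<otimes>\<^bsub>Dinf\<^esub> y \<otimes>\<^bsub>Dinf\<^esub> z = x \<otimes>\<^bsub>Dinf\<^esub> (y \<otimes>\<^bsub>Dinf\<^esub> z)"
    by (simp add: dmul_def)
  show "\<one>\<^bsub>Dinf\<^esub> \<otimes>\<^bsub>Dinf\<^esub> x = x"
    by (simp add: dmul_def)
  show "\<exists>y\<in>carrier Dinf. y \<otimes>\<^bsub>Dinf\<^esub> x = \<one>\<^bsub>Dinf\<^esub>"
    by (rule bexI[of _ "enc (dinv (dec x))"]) (auto simp: dmul_def dinv_def)
qed auto

lemma inv_Dinf[simp]: "inv\<^bsub>Dinf\<^esub> x = enc (dinv (dec x))"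
  by (rule group.inv_equality[OF group_Dinf]) (auto simp: dmul_def dinv_def)

lemma gt_Dinf: "gt_group Dinf"
  unfolding gt_group_def
proof (intro conjI ballI impI)
  show "group Dinf" by (rule group_Dinf)
  fix g :: nat assume g: "g \<noteq> \<one>\<^bsub>Dinf\<^esub>"
  obtain a b where ab: "dec g = (a, b)" by fastforce
  then have ge: "g = enc (a, b)" by (metis enc_dec)
  show "gen_torsion Dinf g"
  proof (cases b)
    case True
    have "pc Dinf g [enc (0,False), enc (0,False)] = \<one>\<^bsub>Dinf\<^esub>"
      using ab True by (simp add: conjg_def dmul_def dinv_def)
    then show ?thesis using g unfolding gen_torsion_pc by (intro conjI exI[of _ "[enc (0,False), enc (0,False)]"]) auto
  next
    case False
    have "pc Dinf g [enc (0,False), enc (0,True)] = \<one>\<^bsub>Dinf\<^esub>"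
      using ab False by (simp add: conjg_def dmul_def dinv_def)
    then show ?thesis using g unfolding gen_torsion_pc by (intro conjI exI[of _ "[enc (0,False), enc (0,True)]"]) auto
  qed
qed

definition Hr :: "nat set" where "Hr = enc ` {p. snd p = False}"

lemma Hr_mem: "n \<in> Hr \<longleftrightarrow> snd (dec n) = False"
proof
  assume "n \<in> Hr" then obtain p where "snd p = False" "n = enc p" unfolding Hr_def by blast
  then show "snd (dec n) = False" by simp
next
  assume "snd (dec n) = False"
  then show "n \<in> Hr" unfolding Hr_def by (intro image_eqI[where x="dec n"]) simp_all
qed

lemma subgroup_Hr: "subgroup Hr Dinf"
proof (rule group.subgroupI[OF group_Dinf])
  show "Hr \<subseteq> carrier Dinf" by simp
  have "enc (0, False) \<in> Hr" by (simp add: Hr_mem)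
  then show "Hr \<noteq> {}" by blast
  fix a b assume "a \<in> Hr" "b \<in> Hr"
  then show "inv\<^bsub>Dinf\<^esub> a \<in> Hr" "a \<otimes>\<^bsub>Dinf\<^esub> b \<in> Hr"
    by (simp_all add: Hr_mem dmul_def dinv_def)
qed

lemma pc_Hr:
  assumes "set xs \<subseteq> Hr"
  shows "pc (Dinf\<lparr>carrier := Hr\<rparr>) (enc (1, False)) xs = enc (int (length xs), False)"
  using assms
proof (induction xs)
  case Nil
  then show ?case by simp
next
  case (Cons x xs)
  have "snd (dec x) = False" using Cons by (simp add: Hr_mem)
  moreover have "inv\<^bsub>Dinf\<lparr>carrier := Hr\<rparr>\<^esub> x = inv\<^bsub>Dinf\<^esub> x"
    using group.m_inv_consistent[OF group_Dinf subgroup_Hr] Cons by simp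
  ultimately show ?case using Cons by (simp add: conjg_def dmul_def dinv_def)
qed

lemma part4: "\<exists>(G :: nat monoid) H. gt_group G \<and> subgroup H G \<and> \<not> gt_group (G\<lparr>carrier := H\<rparr>)"
proof (intro exI conjI)
  show "gt_group Dinf" by (rule gt_Dinf)
  show "subgroup Hr Dinf" by (rule subgroup_Hr)
  show "\<not> gt_group (Dinf\<lparr>carrier := Hr\<rparr>)"
  proof
    assume "gt_group (Dinf\<lparr>carrier := Hr\<rparr>)"
    moreover have "enc (1, False) \<in> Hr" by (simp add: Hr_mem)
    moreover have "enc (1, False) \<noteq> \<one>\<^bsub>Dinf\<lparr>carrier := Hr\<rparr>\<^esub>" by simp
    ultimately have "gen_torsion (Dinf\<lparr>carrier := Hr\<rparr>) (enc (1, False))"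
      unfolding gt_group_def by auto
    then obtain xs where "xs \<noteq> []" "set xs \<subseteq> Hr" "pc (Dinf\<lparr>carrier := Hr\<rparr>) (enc (1, False)) xs = \<one>\<^bsub>Dinf\<lparr>carrier := Hr\<rparr>\<^esub>"
      unfolding gen_torsion_pc by auto
    then show False using pc_Hr by simp
  qed
qed

theorem theorem3p2:
  shows "(\<forall>(G :: ('a, 'b) monoid_scheme) N. gt_group G \<and> N \<lhd> G \<longrightarrow> gt_group (G Mod N))
       \<and> (\<forall>(I :: 'i set) rel (G :: 'i \<Rightarrow> ('c, 'd) monoid_scheme) f.
            directed_system I rel G f \<and> (\<forall>i\<in>I. gt_group (G i))
            \<longrightarrow> gt_group (direct_limit I rel G f))
       \<and> (\<forall>(K :: ('k, 'km) monoid_scheme) (G :: ('g, 'gm) monoid_scheme) (Q :: ('q, 'qm) monoid_scheme) \<iota> \<pi>.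
            group K \<and> group G \<and> group Q \<and>
            \<iota> \<in> hom K G \<and> inj_on \<iota> (carrier K) \<and>
            \<pi> \<in> hom G Q \<and> \<pi> ` carrier G = carrier Q \<and>
            \<iota> ` carrier K = kernel G Q \<pi> \<and>
            gt_group K \<and> gt_group Q
            \<longrightarrow> gt_group G)
       \<and> (\<exists>(G :: nat monoid) H. gt_group G \<and> subgroup H G \<and> \<not> gt_group (G\<lparr>carrier := H\<rparr>))"
  proof (intro conjI allI impI)
  show "gt_group (G Mod N)" if "gt_group G \<and> N \<lhd> G" for G :: "('a, 'b) monoid_scheme" and N
    using part1 that by blast
  show "gt_group (direct_limit I rel G f)"
    if "directed_system I rel G f \<and> (\<forall>i\<in>I. gt_group (G i))"
    for I :: "'i set" and rel and G :: "'i \<Rightarrow> ('c, 'd) monoid_scheme" and f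
    using part2 that by blast
  show "gt_group G" if h: "group K \<and> group G \<and> group Q \<and>
            \<iota> \<in> hom K G \<and> inj_on \<iota> (carrier K) \<and>
            \<pi> \<in> hom G Q \<and> \<pi> ` carrier G = carrier Q \<and>
            \<iota> ` carrier K = kernel G Q \<pi> \<and>
            gt_group K \<and> gt_group Q"
    for K :: "('k, 'km) monoid_scheme" and G :: "('g, 'gm) monoid_scheme" and Q :: "('q, 'qm) monoid_scheme" and \<iota> \<pi>
    using h by (intro part3[of K G Q \<iota> \<pi>]) (elim conjE, assumption)+
  show "\<exists>(G :: nat monoid) H. gt_group G \<and> subgroup H G \<and> \<not> gt_group (G\<lparr>carrier := H\<rparr>)"
    by (rule part4)
qed

end
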